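(* With the notation of the context, let $B(\epsilon)=\{x\in\mathbb{R}^d:\epsilon\le|x|\le1\}$. Then for every fixed $l\ge0$, every $\epsilon\in(0,1)$ and every $p$ with $\frac{2d}{d-1}<p\le\infty$, $$\lim_{k\to\infty}\frac{\|u_{klm}\|_{L^p(B(\epsilon))}}{\|u_{klm}\|_{L^p(\Omega_{\mathrm{ball}})}}=0 .$$
   Context: $L u=-\Delta u+\frac{c^2}{|x|^2}u$ on $\mathbb{R}^d$, $d\ge2$, $c\ge0$. Set $\nu_l=\sqrt{(l+\tfrac d2-1)^2+c^2}$. $J_\nu$ is the Bessel function of the first kind of order $\nu$ and $j_{\nu,k}$ its $k$-th positive zero. $\{Y_{lm}:1\le m\le\dim H_l\}$ is an orthonormal basis of the space $H_l$ of spherical harmonics of degree $l$ on $S^{d-1}$. $\Omega_{\mathrm{ball}}=\{|x|<1\}$, and $u_{klm}(r,\xi)=r^{1-d/2}J_{\nu_l}(j_{\nu_l,k}r)Y_{lm}(\xi)$ in spherical coordinates $x=r\xi$ are the Dirichlet eigenfunctions of $L$ in $\Omega_{\mathrm{ball}}$. *)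

theory Defs
  imports "HOL-Probability.Probability"
begin

definition bessel_J :: "real \<Rightarrow> real \<Rightarrow> real" where
  "bessel_J nu x = (\<Sum>n. (-1) ^ n / (fact n * Gamma (real n + nu + 1)) * (x / 2) powr (2 * real n + nu))"

definition bessel_zero :: "real \<Rightarrow> nat \<Rightarrow> real" where
  "bessel_zero nu k = (THE x. 0 < x \<and> bessel_J nu x = 0 \<and>
      card {y. 0 < y \<and> y < x \<and> bessel_J nu y = 0} = k - 1)"

definition nu_l :: "nat \<Rightarrow> real \<Rightarrow> nat \<Rightarrow> real" where
  "nu_l d c l = sqrt ((real l + real d / 2 - 1)\<^sup>2 + c\<^sup>2)"

definition hom_poly :: "nat \<Rightarrow> (real^'d \<Rightarrow> real) \<Rightarrow> bool" where
  "hom_poly l P \<longleftrightarrow> (\<exists>A :: ('d \<Rightarrow> nat) set. \<exists>a :: ('d \<Rightarrow> nat) \<Rightarrow> real.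
      finite A \<and> (\<forall>\<alpha>\<in>A. (\<Sum>i\<in>UNIV. \<alpha> i) = l) \<and>
      P = (\<lambda>x. \<Sum>\<alpha>\<in>A. a \<alpha> * (\<Prod>i\<in>UNIV. (x $ i) ^ (\<alpha> i))))"

definition laplacian :: "(real^'d \<Rightarrow> real) \<Rightarrow> real^'d \<Rightarrow> real" where
  "laplacian P x = (\<Sum>i\<in>UNIV. deriv (deriv (\<lambda>t. P (x + t *\<^sub>R axis i 1))) 0)"

definition spherical_harmonic :: "nat \<Rightarrow> (real^'d \<Rightarrow> real) \<Rightarrow> bool" where
  "spherical_harmonic l Y \<longleftrightarrow> (\<exists>P. hom_poly l P \<and> (\<forall>x. laplacian P x = 0) \<and>
      (\<forall>x. norm x = 1 \<longrightarrow> Y x = P x))"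

definition u_eig :: "real \<Rightarrow> nat \<Rightarrow> nat \<Rightarrow> (real^'d \<Rightarrow> real) \<Rightarrow> real^'d \<Rightarrow> real" where
  "u_eig c l k Y x =
     (let d = CARD('d); \<nu> = nu_l d c l
      in norm x powr (1 - real d / 2) * bessel_J \<nu> (bessel_zero \<nu> k * norm x) * Y (x /\<^sub>R norm x))"

definition Lp_norm_on :: "ereal \<Rightarrow> 'a::euclidean_space set \<Rightarrow> ('a \<Rightarrow> real) \<Rightarrow> real" where
  "Lp_norm_on p S f =
     (if p = \<infinity> then real_of_ereal (esssup (restrict_space lebesgue S) (\<lambda>x. ereal \<bar>f x\<bar>))
      else (LINT x:S|lebesgue. \<bar>f x\<bar> powr real_of_ereal p) powr (1 / real_of_ereal p))"

definition ball_domain :: "'a::euclidean_space set" where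
  "ball_domain = {x. norm x < 1}"

definition annulus :: "real \<Rightarrow> 'a::euclidean_space set" where
  "annulus \<epsilon> = {x. \<epsilon> \<le> norm x \<and> norm x \<le> 1}"

end

theory Submission
  imports Defs "HOL-Complex_Analysis.Complex_Analysis"
begin
definition bc :: "real \<Rightarrow> nat \<Rightarrow> real" where
  "bc \<nu> n = (-1) ^ n / (fact n * Gamma (real n + \<nu> + 1))"

lemma Gamma_pos_nu: "\<nu> \<ge> 0 \<Longrightarrow> Gamma (real n + \<nu> + 1) > 0"
  by (intro Gamma_real_pos) simp

lemma bc_rec:
  assumes "\<nu> \<ge> 0"
  shows "bc \<nu> (Suc n) = - bc \<nu> n / ((real n + 1) * (real n + \<nu> + 1))"
proof -
  have ni: "real n + \<nu> + 1 \<notin> \<int>\<^sub>\<le>\<^sub>0" using assms nonpos_Ints_nonpos by fastforce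
  have "Gamma (real (Suc n) + \<nu> + 1) = (real n + \<nu> + 1) * Gamma (real n + \<nu> + 1)"
    using Gamma_plus1[OF ni] by (simp add: add_ac)
  then show ?thesis using Gamma_pos_nu[OF assms, of n] assms
    by (simp add: bc_def field_simps)
qed

lemma bc_ode:
  assumes "\<nu> \<ge> 0"
  shows "(real n + 1) * (real n + \<nu> + 1) * bc \<nu> (Suc n) + bc \<nu> n = 0"
proof -
  have D: "(real n + 1) * (real n + \<nu> + 1) > 0" using assms by simp
  have "real n + \<nu> + 1 \<noteq> 0" using assms by linarith
  then show ?thesis unfolding bc_rec[OF assms, of n] using D by simp
qed

lemma bc_summable:
  fixes z :: "'a::{real_normed_field,banach}"
  assumes "\<nu> \<ge> 0"
  shows "summable (\<lambda>n. of_real (bc \<nu> n) * z ^ n)"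
proof (rule summable_ratio_test[where c="1/2" and N="nat \<lceil>2 * norm z\<rceil>"])
  fix n assume n: "nat \<lceil>2 * norm z\<rceil> \<le> n"
  have n2: "2 * norm z \<le> real n + 1" using n by linarith
  define D where "D = (real n + 1) * (real n + \<nu> + 1)"
  have D: "D > 0" using assms by (simp add: D_def)
  have "of_real (bc \<nu> (Suc n)) * z ^ Suc n = (of_real (bc \<nu> n) * z ^ n) * (- z / of_real D)"
    unfolding bc_rec[OF assms, of n] D_def[symmetric] by (simp add: field_simps)
  then have "norm (of_real (bc \<nu> (Suc n)) * z ^ Suc n)
        = norm (of_real (bc \<nu> n) * z ^ n) * (norm z / D)"
    using D by (simp add: norm_mult norm_divide)
  also have "norm z / D \<le> 1/2"
  proof -
    have "norm z \<le> (real n + 1) / 2" using n2 by simp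
    also have "\<dots> \<le> D / 2"
      using assms unfolding D_def by (intro divide_right_mono) (auto intro: mult_le_cancel_left1[THEN iffD2])
    finally show ?thesis using D by (simp add: field_simps)
  qed
  then have "norm (of_real (bc \<nu> n) * z ^ n) * (norm z / D)
      \<le> norm (of_real (bc \<nu> n) * z ^ n) * (1/2)"
    by (intro mult_left_mono) auto
  finally show "norm (of_real (bc \<nu> (Suc n)) * z ^ Suc n) \<le> 1/2 * norm (of_real (bc \<nu> n) * z ^ n)"
    by simp
qed simp

lemma bc_summable_real:
  assumes "\<nu> \<ge> 0" shows "summable (\<lambda>n. bc \<nu> n * (s::real) ^ n)"
  using bc_summable[OF assms, of s] by simp

definition bg :: "real \<Rightarrow> real \<Rightarrow> real" where "bg \<nu> s = (\<Sum>n. bc \<nu> n * s ^ n)"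
definition bg1 :: "real \<Rightarrow> real \<Rightarrow> real" where "bg1 \<nu> s = (\<Sum>n. diffs (bc \<nu>) n * s ^ n)"
definition bg2 :: "real \<Rightarrow> real \<Rightarrow> real" where "bg2 \<nu> s = (\<Sum>n. diffs (diffs (bc \<nu>)) n * s ^ n)"

lemma bg1_summable: "\<nu> \<ge> 0 \<Longrightarrow> summable (\<lambda>n. diffs (bc \<nu>) n * (s::real) ^ n)"
  by (rule termdiff_converges_all) (rule bc_summable_real)

lemma bg2_summable: "\<nu> \<ge> 0 \<Longrightarrow> summable (\<lambda>n. diffs (diffs (bc \<nu>)) n * (s::real) ^ n)"
  by (rule termdiff_converges_all) (rule bg1_summable)

lemma bg_deriv: "\<nu> \<ge> 0 \<Longrightarrow> (bg \<nu> has_real_derivative bg1 \<nu> s) (at s)"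
  unfolding bg_def bg1_def by (rule termdiffs_strong_converges_everywhere) (rule bc_summable_real)

lemma bg1_deriv: "\<nu> \<ge> 0 \<Longrightarrow> (bg1 \<nu> has_real_derivative bg2 \<nu> s) (at s)"
  unfolding bg1_def bg2_def by (rule termdiffs_strong_converges_everywhere) (rule bg1_summable)

lemma bg_cont: "\<nu> \<ge> 0 \<Longrightarrow> isCont (bg \<nu>) s"
  using bg_deriv DERIV_isCont by blast

lemma bg_continuous_on: "\<nu> \<ge> 0 \<Longrightarrow> continuous_on S (bg \<nu>)"
  using bg_cont continuous_at_imp_continuous_on by blast

lemma bg_ode:
  assumes "\<nu> \<ge> 0"
  shows "s * bg2 \<nu> s + (\<nu> + 1) * bg1 \<nu> s + bg \<nu> s = 0"
proof -
  define c where "c = bc \<nu>"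
  have "(\<lambda>n. s * (diffs (diffs c) n * s ^ n)) sums (s * bg2 \<nu> s)"
    unfolding bg2_def c_def by (intro sums_mult summable_sums bg2_summable assms)
  moreover have "(\<lambda>n. s * (diffs (diffs c) n * s ^ n)) = (\<lambda>n. (\<lambda>n. real n * diffs c n * s ^ n) (Suc n))"
    by (auto simp: diffs_def)
  ultimately have A: "(\<lambda>n. real n * diffs c n * s ^ n) sums (s * bg2 \<nu> s)"
    using sums_Suc_iff[of "\<lambda>n. real n * diffs c n * s ^ n"] by simp
  have B: "(\<lambda>n. (\<nu> + 1) * (diffs c n * s ^ n)) sums ((\<nu> + 1) * bg1 \<nu> s)"
    unfolding bg1_def c_def by (intro sums_mult summable_sums bg1_summable assms)
  have C: "(\<lambda>n. c n * s ^ n) sums (bg \<nu> s)"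
    unfolding bg_def c_def by (intro summable_sums bc_summable_real assms)
  have "(\<lambda>n. real n * diffs c n * s ^ n + (\<nu> + 1) * (diffs c n * s ^ n) + c n * s ^ n)
     sums (s * bg2 \<nu> s + (\<nu> + 1) * bg1 \<nu> s + bg \<nu> s)"
    by (intro sums_add A B C)
  moreover have "(\<lambda>n. real n * diffs c n * s ^ n + (\<nu> + 1) * (diffs c n * s ^ n) + c n * s ^ n) = (\<lambda>n. 0)"
  proof
    fix n
    have "real n * diffs c n * s ^ n + (\<nu> + 1) * (diffs c n * s ^ n) + c n * s ^ n
      = ((real n + 1) * (real n + \<nu> + 1) * bc \<nu> (Suc n) + bc \<nu> n) * s ^ n"
      by (simp add: diffs_def c_def algebra_simps)
    then show "real n * diffs c n * s ^ n + (\<nu> + 1) * (diffs c n * s ^ n) + c n * s ^ n = 0"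
      using bc_ode[OF assms, of n] by simp
  qed
  ultimately show ?thesis using sums_unique sums_zero by metis
qed

lemma bessel_J_eq:
  assumes "\<nu> \<ge> 0" "t \<ge> 0"
  shows "bessel_J \<nu> t = (t / 2) powr \<nu> * bg \<nu> ((t / 2)\<^sup>2)"
proof (cases "t = 0")
  case True then show ?thesis by (simp add: bessel_J_def)
next
  case False
  then have t: "t / 2 > 0" using assms by simp
  have "(\<lambda>n. (-1) ^ n / (fact n * Gamma (real n + \<nu> + 1)) * (t / 2) powr (2 * real n + \<nu>))
     = (\<lambda>n. (t / 2) powr \<nu> * (bc \<nu> n * ((t / 2)\<^sup>2) ^ n))"
  proof
    fix n
    have e1: "(t / 2) powr (2 * real n + \<nu>) = (t / 2) powr (real (2 * n)) * (t / 2) powr \<nu>"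
      by (subst powr_add[symmetric]) simp
    have e2: "(t / 2) powr (real (2 * n)) = ((t / 2)\<^sup>2) ^ n"
      unfolding powr_realpow[OF t] by (simp add: power_mult)
    have "(t / 2) powr (2 * real n + \<nu>) = (t / 2) powr \<nu> * ((t / 2)\<^sup>2) ^ n"
      unfolding e1 e2 by simp
    then show "(-1) ^ n / (fact n * Gamma (real n + \<nu> + 1)) * (t / 2) powr (2 * real n + \<nu>)
       = (t / 2) powr \<nu> * (bc \<nu> n * ((t / 2)\<^sup>2) ^ n)" by (simp add: bc_def)
  qed
  then show ?thesis
    unfolding bessel_J_def bg_def using suminf_mult[OF bc_summable_real[OF assms(1)]] by simp
qed

lemma bg_0: "bg \<nu> 0 = bc \<nu> 0"
  unfolding bg_def using powser_zero[of "bc \<nu>"] by simp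

lemma bg_0_pos: "\<nu> \<ge> 0 \<Longrightarrow> bg \<nu> 0 > 0"
  using Gamma_pos_nu[of \<nu> 0] by (simp add: bg_0 bc_def)

definition bw :: "real \<Rightarrow> real \<Rightarrow> real" where
  "bw \<nu> x = x powr (\<nu> + 1/2) * bg \<nu> (x\<^sup>2 / 4)"
definition bw1 :: "real \<Rightarrow> real \<Rightarrow> real" where
  "bw1 \<nu> x = x powr (\<nu> + 1/2) * ((\<nu> + 1/2) / x * bg \<nu> (x\<^sup>2 / 4) + x / 2 * bg1 \<nu> (x\<^sup>2 / 4))"

lemma powr_minus_one': "x > 0 \<Longrightarrow> x powr (a - 1) = x powr a / (x::real)"
  by (simp add: powr_diff)

lemma bw_deriv:
  assumes "\<nu> \<ge> 0" "x > 0"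
  shows "(bw \<nu> has_real_derivative bw1 \<nu> x) (at x)"
proof -
  define \<mu> where "\<mu> = \<nu> + 1/2"
  have d1: "((\<lambda>x. x powr \<mu>) has_real_derivative \<mu> * (x powr \<mu> / x)) (at x)"
    using assms has_real_derivative_powr[of x \<mu>] by (simp only: powr_minus_one')
  have d2: "((\<lambda>x. bg \<nu> (x\<^sup>2 / 4)) has_real_derivative bg1 \<nu> (x\<^sup>2 / 4) * (x / 2)) (at x)"
    by (rule DERIV_chain2[OF bg_deriv[OF assms(1)]]) (auto intro!: derivative_eq_intros)
  have "(bw \<nu> has_real_derivative \<mu> * (x powr \<mu> / x) * bg \<nu> (x\<^sup>2 / 4) + bg1 \<nu> (x\<^sup>2 / 4) * (x / 2) * x powr \<mu>) (at x)"
    unfolding bw_def[abs_def] \<mu>_def[symmetric] by (rule DERIV_mult[OF d1 d2])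
  moreover have "\<mu> * (x powr \<mu> / x) * bg \<nu> (x\<^sup>2 / 4) + bg1 \<nu> (x\<^sup>2 / 4) * (x / 2) * x powr \<mu> = bw1 \<nu> x"
    unfolding bw1_def \<mu>_def[symmetric] using assms by (simp add: field_simps)
  ultimately show ?thesis by simp
qed

lemma alg1: "(x::real) > 0 \<Longrightarrow> \<mu> * (P / x) * (\<mu> / x * G0 + x / 2 * G1)
     + (\<mu> / x * (G1 * (x / 2)) + - \<mu> / x\<^sup>2 * G0 + (x / 2 * (G2 * (x / 2)) + 1 / 2 * G1)) * P
   = P * ((\<mu>\<^sup>2 - \<mu>) / x\<^sup>2 * G0 + (\<mu> + 1/2) * G1 + x\<^sup>2 / 4 * G2)"
  by (simp add: field_simps power2_eq_square)

lemma alg2: "(x::real) > 0 \<Longrightarrow> P * (((\<nu> + 1/2)\<^sup>2 - (\<nu> + 1/2)) / x\<^sup>2 * G0 + ((\<nu> + 1/2) + 1/2) * G1 + (- (\<nu> + 1) * G1 - G0))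
   = - (1 - (\<nu>\<^sup>2 - 1/4) / x\<^sup>2) * (P * G0)"
  by (simp add: field_simps power2_eq_square)

lemma bw1_deriv:
  assumes "\<nu> \<ge> 0" "x > 0"
  shows "(bw1 \<nu> has_real_derivative (- (1 - (\<nu>\<^sup>2 - 1/4) / x\<^sup>2) * bw \<nu> x)) (at x)"
proof -
  define \<mu> where "\<mu> = \<nu> + 1/2"
  define G0 where "G0 = (\<lambda>x. bg \<nu> (x\<^sup>2 / 4))"
  define G1 where "G1 = (\<lambda>x. bg1 \<nu> (x\<^sup>2 / 4))"
  define G2 where "G2 = (\<lambda>x. bg2 \<nu> (x\<^sup>2 / 4))"
  have d1: "((\<lambda>x. x powr \<mu>) has_real_derivative \<mu> * (x powr \<mu> / x)) (at x)"
    using assms has_real_derivative_powr[of x \<mu>] by (simp only: powr_minus_one')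
  have d2: "(G0 has_real_derivative G1 x * (x / 2)) (at x)"
    unfolding G0_def G1_def
    by (rule DERIV_chain2[OF bg_deriv[OF assms(1)]]) (auto intro!: derivative_eq_intros)
  have d3: "(G1 has_real_derivative G2 x * (x / 2)) (at x)"
    unfolding G1_def G2_def
    by (rule DERIV_chain2[OF bg1_deriv[OF assms(1)]]) (auto intro!: derivative_eq_intros)
  have d5: "((\<lambda>x. \<mu> / x) has_real_derivative - \<mu> / x\<^sup>2) (at x)"
    using assms by (auto intro!: derivative_eq_intros simp: power2_eq_square)
  have d6: "((\<lambda>x. x / 2) has_real_derivative 1 / 2) (at x)"
    by (auto intro!: derivative_eq_intros)
  have d4: "((\<lambda>x. \<mu> / x * G0 x + x / 2 * G1 x) has_real_derivative
     (\<mu> / x * (G1 x * (x / 2)) + - \<mu> / x\<^sup>2 * G0 x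
      + (x / 2 * (G2 x * (x / 2)) + 1 / 2 * G1 x))) (at x)"
    by (rule DERIV_add[OF DERIV_mult'[OF d5 d2] DERIV_mult'[OF d6 d3]])
  have "(bw1 \<nu> has_real_derivative \<mu> * (x powr \<mu> / x) * (\<mu> / x * G0 x + x / 2 * G1 x)
     + (\<mu> / x * (G1 x * (x / 2)) + - \<mu> / x\<^sup>2 * G0 x
      + (x / 2 * (G2 x * (x / 2)) + 1 / 2 * G1 x)) * x powr \<mu>) (at x)"
  proof -
    have "bw1 \<nu> = (\<lambda>x. x powr \<mu> * (\<mu> / x * G0 x + x / 2 * G1 x))"
      by (simp add: bw1_def G0_def G1_def \<mu>_def fun_eq_iff)
    then show ?thesis by (simp only:) (rule DERIV_mult[OF d1 d4])
  qed
  moreover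
  have ode: "x\<^sup>2 / 4 * G2 x = - (\<nu> + 1) * G1 x - G0 x"
    using bg_ode[OF assms(1), of "x\<^sup>2 / 4"] unfolding G0_def G1_def G2_def by linarith
  have "\<mu> * (x powr \<mu> / x) * (\<mu> / x * G0 x + x / 2 * G1 x)
     + (\<mu> / x * (G1 x * (x / 2)) + - \<mu> / x\<^sup>2 * G0 x
      + (x / 2 * (G2 x * (x / 2)) + 1 / 2 * G1 x)) * x powr \<mu>
   = x powr \<mu> * ((\<mu>\<^sup>2 - \<mu>) / x\<^sup>2 * G0 x + (\<mu> + 1/2) * G1 x + x\<^sup>2 / 4 * G2 x)"
    by (rule alg1[OF assms(2)])
  also have "\<dots> = - (1 - (\<nu>\<^sup>2 - 1/4) / x\<^sup>2) * bw \<nu> x"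
    unfolding ode \<mu>_def using alg2[OF assms(2)] by (simp add: bw_def G0_def)
  ultimately show ?thesis by simp
qed

lemma enum_exists:
  fixes Z :: "real set"
  assumes fin: "\<And>R. finite {y\<in>Z. y \<le> R}" and unb: "\<And>X. \<exists>x\<in>Z. X < x"
  shows "\<exists>x. x \<in> Z \<and> card {y\<in>Z. y < x} = n"
proof (induction n)
  case 0
  obtain z where z: "z \<in> Z" using unb by blast
  define F where "F = {y\<in>Z. y \<le> z}"
  have F: "finite F" "F \<noteq> {}" using fin z by (auto simp: F_def)
  define m where "m = Min F"
  have mF: "m \<in> F" using F Min_in m_def by blast
  have "{y\<in>Z. y < m} = {}"
  proof (rule ccontr)
    assume "{y\<in>Z. y < m} \<noteq> {}"
    then obtain y where y: "y \<in> Z" "y < m" by auto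
    then have "y \<in> F" using mF by (auto simp: F_def)
    then have "m \<le> y" using F m_def by simp
    then show False using y by simp
  qed
  then have "card {y\<in>Z. y < m} = 0" by (metis card.empty)
  then show ?case using mF by (auto simp: F_def)
next
  case (Suc n)
  then obtain x where x: "x \<in> Z" "card {y\<in>Z. y < x} = n" by blast
  obtain z where z: "z \<in> Z" "x < z" using unb by blast
  define F where "F = {y\<in>Z. x < y \<and> y \<le> z}"
  have F: "finite F" "F \<noteq> {}"
    using z by (auto simp: F_def intro: finite_subset[OF _ fin[of z]])
  define m where "m = Min F"
  have mF: "m \<in> F" using F Min_in m_def by blast
  have "{y\<in>Z. y < m} = insert x {y\<in>Z. y < x}"
  proof (intro equalityI subsetI)
    fix y assume y: "y \<in> {y\<in>Z. y < m}"
    show "y \<in> insert x {y\<in>Z. y < x}"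
    proof (rule ccontr)
      assume "y \<notin> insert x {y\<in>Z. y < x}"
      then have "x < y" using y by auto
      then have "y \<in> F" using y mF by (auto simp: F_def)
      then have "m \<le> y" using F m_def by simp
      then show False using y by simp
    qed
  next
    fix y assume "y \<in> insert x {y\<in>Z. y < x}"
    then show "y \<in> {y\<in>Z. y < m}" using mF x by (auto simp: F_def)
  qed
  moreover have "finite {y\<in>Z. y < x}" by (rule finite_subset[OF _ fin[of x]]) auto
  ultimately have "card {y\<in>Z. y < m} = Suc n" using x by simp
  then show ?case using mF by (auto simp: F_def)
qed

lemma enum_unique:
  fixes Z :: "real set"
  assumes fin: "\<And>R. finite {y\<in>Z. y \<le> R}" and unb: "\<And>X. \<exists>x\<in>Z. X < x"
  shows "\<exists>!x. x \<in> Z \<and> card {y\<in>Z. y < x} = n"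
proof (rule ex_ex1I)
  show "\<exists>x. x \<in> Z \<and> card {y\<in>Z. y < x} = n" by (rule enum_exists[OF fin unb])
next
  have lt: False if "x1 \<in> Z" "x2 \<in> Z" "x1 < x2" "card {y\<in>Z. y < x1} = card {y\<in>Z. y < x2}" for x1 x2
  proof -
    have "insert x1 {y\<in>Z. y < x1} \<subseteq> {y\<in>Z. y < x2}" using that by auto
    moreover have "finite {y\<in>Z. y < x2}" by (rule finite_subset[OF _ fin[of x2]]) auto
    ultimately have "card (insert x1 {y\<in>Z. y < x1}) \<le> card {y\<in>Z. y < x2}"
      by (rule card_mono[rotated])
    moreover have "finite {y\<in>Z. y < x1}" by (rule finite_subset[OF _ fin[of x1]]) auto
    ultimately show False using that by simp
  qed
  fix x y assume "x \<in> Z \<and> card {y\<in>Z. y < x} = n" "y \<in> Z \<and> card {ya\<in>Z. ya < y} = n"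
  then show "x = y" using lt[of x y] lt[of y x] by (cases x y rule: linorder_cases) auto
qed

lemma enum_tendsto:
  fixes Z :: "real set" and j :: "nat \<Rightarrow> real"
  assumes fin: "\<And>R. finite {y\<in>Z. y \<le> R}"
    and j: "\<And>k. j k \<in> Z \<and> card {y\<in>Z. y < j k} = k - 1"
  shows "filterlim j at_top sequentially"
unfolding filterlim_at_top proof (intro allI)
  fix R :: real
  define N where "N = card {y\<in>Z. y \<le> R}"
  show "eventually (\<lambda>k. R \<le> j k) sequentially"
  proof (rule eventually_sequentiallyI[of "N + 2"])
    fix k assume k: "N + 2 \<le> k"
    show "R \<le> j k"
    proof (rule ccontr)
      assume "\<not> R \<le> j k"
      then have "{y\<in>Z. y < j k} \<subseteq> {y\<in>Z. y \<le> R}" by auto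
      then have "card {y\<in>Z. y < j k} \<le> N" unfolding N_def by (intro card_mono fin)
      then show False using j[of k] k by simp
    qed
  qed
qed

definition gc :: "real \<Rightarrow> complex \<Rightarrow> complex" where
  "gc \<nu> z = (\<Sum>n. of_real (bc \<nu> n) * z ^ n)"

lemma gc_holo: "\<nu> \<ge> 0 \<Longrightarrow> gc \<nu> holomorphic_on UNIV"
proof -
  assume "\<nu> \<ge> 0"
  have "\<And>z. (gc \<nu> has_field_derivative (\<Sum>n. diffs (\<lambda>n. of_real (bc \<nu> n)) n * z ^ n)) (at z)"
    unfolding gc_def[abs_def] by (rule termdiffs_strong_converges_everywhere) (rule bc_summable[OF \<open>\<nu> \<ge> 0\<close>])
  then show ?thesis
    by (subst holomorphic_on_open) auto
qed

lemma gc_of_real: "\<nu> \<ge> 0 \<Longrightarrow> gc \<nu> (of_real s) = of_real (bg \<nu> s)"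
proof -
  assume a: "\<nu> \<ge> 0"
  have "(\<lambda>n. bc \<nu> n * s ^ n) sums bg \<nu> s"
    unfolding bg_def by (intro summable_sums bc_summable_real a)
  then have "(\<lambda>n. of_real (bc \<nu> n * s ^ n) :: complex) sums of_real (bg \<nu> s)"
    by (subst sums_of_real_iff)
  then have "(\<lambda>n. of_real (bc \<nu> n) * (of_real s) ^ n :: complex) sums of_real (bg \<nu> s)"
    by (simp only: of_real_mult of_real_power)
  then show ?thesis unfolding gc_def by (rule sums_unique[symmetric])
qed

lemma bg_zeros_finite:
  assumes "\<nu> \<ge> 0"
  shows "finite {s. 0 \<le> s \<and> s \<le> R \<and> bg \<nu> s = 0}"
proof -
  have fz: "finite {z\<in>cball 0 R. gc \<nu> z = 0}"
  proof (cases "gc \<nu> constant_on UNIV")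
    case True
    then obtain c where c: "\<And>z. gc \<nu> z = c" by (auto simp: constant_on_def)
    have "gc \<nu> 0 \<noteq> 0" using gc_of_real[OF assms, of 0] bg_0_pos[OF assms] by simp
    then have e: "{z\<in>cball 0 R. gc \<nu> z = 0} = {}" by (simp add: c)
    show ?thesis unfolding e by simp
  next
    case False
    have K: "cball 0 R \<subseteq> UNIV" by simp
    show ?thesis
      by (rule holomorphic_compact_finite_zeros[OF gc_holo[OF assms] open_UNIV connected_UNIV compact_cball K False])
  qed
  have sub: "of_real ` {s. 0 \<le> s \<and> s \<le> R \<and> bg \<nu> s = 0} \<subseteq> {z\<in>cball 0 R. gc \<nu> z = 0}"
  proof
    fix z :: complex assume "z \<in> of_real ` {s. 0 \<le> s \<and> s \<le> R \<and> bg \<nu> s = 0}"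
    then obtain s where s: "z = of_real s" "0 \<le> s" "s \<le> R" "bg \<nu> s = 0" by blast
    have "dist 0 z \<le> R" using s by simp
    moreover have "gc \<nu> z = 0" using s gc_of_real[OF assms, of s] by simp
    ultimately show "z \<in> {z\<in>cball 0 R. gc \<nu> z = 0}" by simp
  qed
  have "finite (of_real ` {s. 0 \<le> s \<and> s \<le> R \<and> bg \<nu> s = 0} :: complex set)"
    by (rule finite_subset[OF sub fz])
  moreover have "inj_on (of_real :: real \<Rightarrow> complex) {s. 0 \<le> s \<and> s \<le> R \<and> bg \<nu> s = 0}"
    by (rule inj_on_subset[OF inj_of_real]) simp
  ultimately show ?thesis by (rule finite_imageD)
qed

definition bZ :: "real \<Rightarrow> real set" where
  "bZ \<nu> = {x. 0 < x \<and> bessel_J \<nu> x = 0}"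

lemma bessel_J_zero_iff:
  assumes "\<nu> \<ge> 0" "x > 0"
  shows "bessel_J \<nu> x = 0 \<longleftrightarrow> bg \<nu> (x\<^sup>2 / 4) = 0"
proof -
  have "bessel_J \<nu> x = (x / 2) powr \<nu> * bg \<nu> ((x / 2)\<^sup>2)"
    by (rule bessel_J_eq) (use assms in auto)
  moreover have "(x / 2)\<^sup>2 = x\<^sup>2 / 4" by (simp add: power2_eq_square)
  moreover have "(x / 2) powr \<nu> > 0" using assms by simp
  ultimately show ?thesis by simp
qed

lemma bZ_finite:
  assumes "\<nu> \<ge> 0"
  shows "finite {y\<in>bZ \<nu>. y \<le> R}"
proof -
  have "{y\<in>bZ \<nu>. y \<le> R} \<subseteq> (\<lambda>s. 2 * sqrt s) ` {s. 0 \<le> s \<and> s \<le> R\<^sup>2 / 4 \<and> bg \<nu> s = 0}"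
  proof
    fix y assume y: "y \<in> {y\<in>bZ \<nu>. y \<le> R}"
    then have y0: "y > 0" "bg \<nu> (y\<^sup>2 / 4) = 0" "y \<le> R"
      using bessel_J_zero_iff[OF assms] by (auto simp: bZ_def)
    have "y\<^sup>2 \<le> R\<^sup>2" using y0 by (intro power_mono) auto
    moreover have "sqrt (y\<^sup>2 / 4) = y / 2"
      by (rule real_sqrt_unique) (use y0 in \<open>auto simp: power2_eq_square\<close>)
    then have "y = 2 * sqrt (y\<^sup>2 / 4)" by simp
    ultimately show "y \<in> (\<lambda>s. 2 * sqrt s) ` {s. 0 \<le> s \<and> s \<le> R\<^sup>2 / 4 \<and> bg \<nu> s = 0}"
      using y0 by (intro image_eqI[of _ _ "y\<^sup>2 / 4"]) auto
  qed
  then show ?thesis using bg_zeros_finite[OF assms] finite_subset by blast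
qed

lemma sturm_contra:
  fixes v v1 q :: "real \<Rightarrow> real" and a :: real
  assumes d: "\<And>x. a \<le> x \<Longrightarrow> x \<le> a + 2 * pi \<Longrightarrow> (v has_real_derivative v1 x) (at x)"
    and d1: "\<And>x. a \<le> x \<Longrightarrow> x \<le> a + 2 * pi \<Longrightarrow> (v1 has_real_derivative - q x * v x) (at x)"
    and q: "\<And>x. a \<le> x \<Longrightarrow> x \<le> a + 2 * pi \<Longrightarrow> q x \<ge> 1/4"
    and pos: "\<And>x. a \<le> x \<Longrightarrow> x \<le> a + 2 * pi \<Longrightarrow> v x > 0"
  shows False
proof -
  define W where "W x = v1 x * sin ((x - a) / 2) - v x * (cos ((x - a) / 2) / 2)" for x
  have "W (a + 2 * pi) \<le> W a"
  proof (rule DERIV_nonpos_imp_nonincreasing[of a "a + 2 * pi" W])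
    show "a \<le> a + 2 * pi" by simp
  next
    fix x assume x: "a \<le> x" "x \<le> a + 2 * pi"
    have ds: "((\<lambda>x. sin ((x - a) / 2)) has_real_derivative cos ((x - a) / 2) * (1 / 2)) (at x)"
      by (auto intro!: derivative_eq_intros)
    have dc: "((\<lambda>x. cos ((x - a) / 2) / 2) has_real_derivative - sin ((x - a) / 2) * (1 / 2) / 2) (at x)"
      by (auto intro!: derivative_eq_intros)
    have "(W has_real_derivative
       ((- q x * v x) * sin ((x - a) / 2) + cos ((x - a) / 2) * (1 / 2) * v1 x)
        - (v1 x * (cos ((x - a) / 2) / 2) + (- sin ((x - a) / 2) * (1 / 2) / 2) * v x)) (at x)"
      unfolding W_def[abs_def] by (intro DERIV_diff DERIV_mult d1 ds d dc x)
    moreover have "((- q x * v x) * sin ((x - a) / 2) + cos ((x - a) / 2) * (1 / 2) * v1 x)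
        - (v1 x * (cos ((x - a) / 2) / 2) + (- sin ((x - a) / 2) * (1 / 2) / 2) * v x)
       = (1/4 - q x) * (v x * sin ((x - a) / 2))" by (simp add: algebra_simps)
    moreover have "(1/4 - q x) * (v x * sin ((x - a) / 2)) \<le> 0"
    proof (rule mult_nonpos_nonneg)
      show "1/4 - q x \<le> 0" using q[OF x] by simp
      have "0 \<le> sin ((x - a) / 2)" by (rule sin_ge_zero) (use x in auto)
      then show "0 \<le> v x * sin ((x - a) / 2)" using pos[OF x] by simp
    qed
    ultimately show "\<exists>y. (W has_real_derivative y) (at x) \<and> y \<le> 0" by auto
  qed
  moreover have "W a = - v a / 2" by (simp add: W_def)
  moreover have "W (a + 2 * pi) = v (a + 2 * pi) / 2" by (simp add: W_def)
  ultimately show False using pos[of a] pos[of "a + 2 * pi"] by simp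
qed

lemma bw_cont_on:
  assumes "\<nu> \<ge> 0" "0 < a"
  shows "continuous_on {a..b} (bw \<nu>)"
  by (rule DERIV_continuous_on[where D="bw1 \<nu>"])
     (use bw_deriv[OF assms(1)] assms(2) in \<open>auto intro: has_field_derivative_at_within\<close>)

lemma bw_zero_exists:
  assumes "\<nu> \<ge> 0"
  shows "\<exists>x>X. bw \<nu> x = 0"
proof (rule ccontr)
  assume no: "\<not> (\<exists>x>X. bw \<nu> x = 0)"
  define \<kappa> where "\<kappa> = \<nu>\<^sup>2 - 1/4"
  define a where "a = max X 0 + 2 * \<bar>\<kappa>\<bar> + 1"
  have a: "a > X" "a \<ge> 1" "a \<ge> 2 * \<bar>\<kappa>\<bar> + 1" by (auto simp: a_def)
  define q where "q x = 1 - \<kappa> / x\<^sup>2" for x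
  have qb: "q x \<ge> 1/4" if "a \<le> x" for x
  proof -
    have x1: "x \<ge> 1" using a that by simp
    have "x\<^sup>2 \<ge> x" using x1 by (simp add: power2_eq_square)
    then have "x\<^sup>2 \<ge> 2 * \<bar>\<kappa>\<bar> + 1" using a that by simp
    then have "\<bar>\<kappa>\<bar> / x\<^sup>2 \<le> 1/2" using x1 by (simp add: field_simps)
    moreover have "\<kappa> / x\<^sup>2 \<le> \<bar>\<kappa>\<bar> / x\<^sup>2" by (intro divide_right_mono) auto
    ultimately have "\<kappa> / x\<^sup>2 \<le> 1/2" by linarith
    then show ?thesis unfolding q_def by linarith
  qed
  have nz: "bw \<nu> x \<noteq> 0" if "a \<le> x" for x using no a that by auto
  have cont: "continuous_on {a..x} (bw \<nu>)" for x using bw_cont_on[OF assms] a by simp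
  have dd: "(bw \<nu> has_real_derivative bw1 \<nu> x) (at x)" "(bw1 \<nu> has_real_derivative - q x * bw \<nu> x) (at x)"
    if "a \<le> x" for x
    using bw_deriv[OF assms, of x] bw1_deriv[OF assms, of x] a that by (auto simp: q_def \<kappa>_def)
  consider "bw \<nu> a > 0" | "bw \<nu> a < 0" using nz[of a] by linarith
  then show False
  proof cases
    case 1
    have pos: "bw \<nu> x > 0" if ax: "a \<le> x" for x
    proof (rule ccontr)
      assume "\<not> bw \<nu> x > 0"
      then have "\<exists>y\<ge>a. y \<le> x \<and> bw \<nu> y = 0"
        using IVT2'[of "bw \<nu>" x 0 a] cont[of x] 1 ax by auto
      then obtain y where "a \<le> y" "y \<le> x" "bw \<nu> y = 0" by blast
      then show False using nz by auto
    qed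
    show False
      by (rule sturm_contra[of a "bw \<nu>" "bw1 \<nu>" q]) (use dd qb pos in auto)
  next
    case 2
    have neg: "bw \<nu> x < 0" if ax: "a \<le> x" for x
    proof (rule ccontr)
      assume "\<not> bw \<nu> x < 0"
      then have "\<exists>y\<ge>a. y \<le> x \<and> bw \<nu> y = 0"
        using IVT'[of "bw \<nu>" a 0 x] cont[of x] 2 ax by auto
      then obtain y where "a \<le> y" "y \<le> x" "bw \<nu> y = 0" by blast
      then show False using nz by auto
    qed
    show False
    proof (rule sturm_contra[of a "\<lambda>x. - bw \<nu> x" "\<lambda>x. - bw1 \<nu> x" q])
      fix x assume x: "a \<le> x"
      show "((\<lambda>x. - bw \<nu> x) has_real_derivative - bw1 \<nu> x) (at x)"
        using dd(1)[OF x] by (rule DERIV_minus)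
      show "((\<lambda>x. - bw1 \<nu> x) has_real_derivative - q x * - bw \<nu> x) (at x)"
        using DERIV_minus[OF dd(2)[OF x]] by simp
      show "q x \<ge> 1/4" using qb[OF x] .
      show "- bw \<nu> x > 0" using neg[OF x] by simp
    qed
  qed
qed

lemma bZ_unbounded:
  assumes "\<nu> \<ge> 0"
  shows "\<exists>x\<in>bZ \<nu>. X < x"
proof -
  obtain x where x: "x > max X 0" "bw \<nu> x = 0" using bw_zero_exists[OF assms] by blast
  then have "bg \<nu> (x\<^sup>2 / 4) = 0" by (simp add: bw_def)
  then have "x \<in> bZ \<nu>" using bessel_J_zero_iff[OF assms, of x] x by (simp add: bZ_def)
  then show ?thesis using x by auto
qed

lemma bessel_zero_props:
  assumes "\<nu> \<ge> 0"
  shows "bessel_zero \<nu> k \<in> bZ \<nu> \<and> card {y\<in>bZ \<nu>. y < bessel_zero \<nu> k} = k - 1"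
proof -
  have eq: "(\<lambda>x. 0 < x \<and> bessel_J \<nu> x = 0 \<and> card {y. 0 < y \<and> y < x \<and> bessel_J \<nu> y = 0} = k - 1)
     = (\<lambda>x. x \<in> bZ \<nu> \<and> card {y\<in>bZ \<nu>. y < x} = k - 1)"
  proof (rule ext)
    fix x
    have "{y. 0 < y \<and> y < x \<and> bessel_J \<nu> y = 0} = {y\<in>bZ \<nu>. y < x}" by (auto simp: bZ_def)
    then show "(0 < x \<and> bessel_J \<nu> x = 0 \<and> card {y. 0 < y \<and> y < x \<and> bessel_J \<nu> y = 0} = k - 1)
      = (x \<in> bZ \<nu> \<and> card {y\<in>bZ \<nu>. y < x} = k - 1)" by (simp add: bZ_def)
  qed
  have "\<exists>!x. x \<in> bZ \<nu> \<and> card {y\<in>bZ \<nu>. y < x} = k - 1"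
    by (rule enum_unique) (use bZ_finite[OF assms] bZ_unbounded[OF assms] in auto)
  from theI'[OF this] show ?thesis unfolding bessel_zero_def eq .
qed

lemma bessel_zero_pos: "\<nu> \<ge> 0 \<Longrightarrow> bessel_zero \<nu> k > 0"
  using bessel_zero_props[of \<nu> k] by (simp add: bZ_def)

lemma bessel_zero_tendsto:
  assumes "\<nu> \<ge> 0"
  shows "filterlim (bessel_zero \<nu>) at_top sequentially"
  by (rule enum_tendsto[where Z="bZ \<nu>"]) (use bZ_finite[OF assms] bessel_zero_props[OF assms] in auto)

lemma energyF:
  fixes v v1 r :: "real \<Rightarrow> real"
  assumes d: "(v has_real_derivative v1 x) (at x)"
    and d1: "(v1 has_real_derivative - q * v x) (at x)"
    and dr: "(r has_real_derivative dr) (at x)"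
    and qr: "q * r x = 1"
  shows "((\<lambda>x. v1 x * v1 x * r x + v x * v x) has_real_derivative dr * (v1 x * v1 x)) (at x)"
proof -
  have "((\<lambda>x. v1 x * v1 x * r x + v x * v x) has_real_derivative
     ((- q * v x) * v1 x + (- q * v x) * v1 x) * r x + dr * (v1 x * v1 x) + (v1 x * v x + v1 x * v x)) (at x)"
    by (intro DERIV_add DERIV_mult d d1 dr)
  moreover have "((- q * v x) * v1 x + (- q * v x) * v1 x) * r x + dr * (v1 x * v1 x) + (v1 x * v x + v1 x * v x)
      = dr * (v1 x * v1 x)"
  proof -
    have "((- q * v x) * v1 x + (- q * v x) * v1 x) * r x = - 2 * (v x * v1 x) * (q * r x)"
      by (simp add: algebra_simps)
    also have "\<dots> = - 2 * (v x * v1 x)" using qr by simp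
    finally show ?thesis by simp
  qed
  ultimately show ?thesis by (rule DERIV_cong)
qed

lemma energyE:
  fixes v v1 Q :: "real \<Rightarrow> real"
  assumes d: "(v has_real_derivative v1 x) (at x)"
    and d1: "(v1 has_real_derivative - Q x * v x) (at x)"
    and dQ: "(Q has_real_derivative dQ) (at x)"
  shows "((\<lambda>x. v1 x * v1 x + Q x * (v x * v x)) has_real_derivative dQ * (v x * v x)) (at x)"
proof -
  have "((\<lambda>x. v1 x * v1 x + Q x * (v x * v x)) has_real_derivative
     ((- Q x * v x) * v1 x + (- Q x * v x) * v1 x) + (dQ * (v x * v x) + (v1 x * v x + v1 x * v x) * Q x)) (at x)"
    by (intro DERIV_add DERIV_mult d d1 dQ)
  moreover have "((- Q x * v x) * v1 x + (- Q x * v x) * v1 x) + (dQ * (v x * v x) + (v1 x * v x + v1 x * v x) * Q x)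
      = dQ * (v x * v x)" by (simp add: algebra_simps)
  ultimately show ?thesis by simp
qed

lemma sq_le_imp_abs_le: "(y::real) * y \<le> C \<Longrightarrow> \<bar>y\<bar> \<le> sqrt (max 0 C)"
  by (metis max.cobounded2 order.trans real_sqrt_abs real_sqrt_le_mono power2_eq_square)

lemma bw_bounded:
  assumes "\<nu> \<ge> 0"
  shows "\<exists>C X0. 0 < X0 \<and> (\<forall>x\<ge>X0. \<bar>bw \<nu> x\<bar> \<le> C)"
proof -
  define \<kappa> where "\<kappa> = \<nu>\<^sup>2 - 1/4"
  have dd: "(bw \<nu> has_real_derivative bw1 \<nu> x) (at x)"
           "(bw1 \<nu> has_real_derivative - (1 - \<kappa> / (x * x)) * bw \<nu> x) (at x)" if "x > 0" for x
    using bw_deriv[OF assms that] bw1_deriv[OF assms that] by (auto simp: \<kappa>_def power2_eq_square)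
  show ?thesis
  proof (cases "\<kappa> \<ge> 0")
    case True
    define X0 where "X0 = 2 * \<kappa> + 1"
    have X0: "X0 \<ge> 1" using True by (simp add: X0_def)
    have big: "x * x - \<kappa> > 0" if "x \<ge> X0" for x
    proof -
      have "x * x \<ge> x" using X0 that by (simp add: mult_le_cancel_left1)
      then show ?thesis using that True X0_def by linarith
    qed
    define r where "r x = x * x / (x * x - \<kappa>)" for x
    define F where "F x = bw1 \<nu> x * bw1 \<nu> x * r x + bw \<nu> x * bw \<nu> x" for x
    have Fmono: "F x \<le> F X0" if "x \<ge> X0" for x
    proof (rule DERIV_nonpos_imp_nonincreasing[of X0 x F])
      show "X0 \<le> x" using that .
    next
      fix y assume y: "X0 \<le> y" "y \<le> x"
      have y0: "y > 0" using y X0 by simp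
      have yb: "y * y - \<kappa> > 0" using big y by simp
      have drr: "(r has_real_derivative (- 2 * \<kappa> * y / ((y * y - \<kappa>) * (y * y - \<kappa>)))) (at y)"
        unfolding r_def[abs_def] using yb
        by (auto intro!: derivative_eq_intros simp: field_simps)
      have qr: "(1 - \<kappa> / (y * y)) * r y = 1" using yb y0 by (simp add: r_def field_simps)
      have "(F has_real_derivative (- 2 * \<kappa> * y / ((y * y - \<kappa>) * (y * y - \<kappa>))) * (bw1 \<nu> y * bw1 \<nu> y)) (at y)"
        unfolding F_def[abs_def] by (rule energyF[OF dd[OF y0] drr qr])
      moreover have "(- 2 * \<kappa> * y / ((y * y - \<kappa>) * (y * y - \<kappa>))) * (bw1 \<nu> y * bw1 \<nu> y) \<le> 0"
        by (rule mult_nonpos_nonneg) (use True y0 in \<open>auto simp: divide_nonpos_nonneg\<close>)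
      ultimately show "\<exists>d. (F has_real_derivative d) (at y) \<and> d \<le> 0" by blast
    qed
    have "\<bar>bw \<nu> x\<bar> \<le> sqrt (max 0 (F X0))" if "x \<ge> X0" for x
    proof (rule sq_le_imp_abs_le)
      have "r x > 0" using big[OF that] X0 that by (simp add: r_def)
      then have "bw1 \<nu> x * bw1 \<nu> x * r x \<ge> 0" by simp
      then have "bw \<nu> x * bw \<nu> x \<le> F x" by (simp add: F_def)
      then show "bw \<nu> x * bw \<nu> x \<le> F X0" using Fmono[OF that] by simp
    qed
    then show ?thesis using X0 by (intro exI[of _ "sqrt (max 0 (F X0))"] exI[of _ X0]) auto
  next
    case False
    define Q where "Q x = 1 - \<kappa> / (x * x)" for x
    define E where "E x = bw1 \<nu> x * bw1 \<nu> x + Q x * (bw \<nu> x * bw \<nu> x)" for x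
    have Emono: "E x \<le> E 1" if "x \<ge> 1" for x
    proof (rule DERIV_nonpos_imp_nonincreasing[of 1 x E])
      show "1 \<le> x" using that .
    next
      fix y :: real assume y: "1 \<le> y" "y \<le> x"
      have y0: "y > 0" using y by simp
      have dQ: "(Q has_real_derivative 2 * \<kappa> / (y * y * y)) (at y)"
        unfolding Q_def[abs_def] using y0
        by (auto intro!: derivative_eq_intros simp: field_simps)
      have "(E has_real_derivative 2 * \<kappa> / (y * y * y) * (bw \<nu> y * bw \<nu> y)) (at y)"
      proof -
        have d2: "(bw1 \<nu> has_real_derivative - Q y * bw \<nu> y) (at y)"
          using dd(2)[OF y0] by (simp add: Q_def)
        show ?thesis unfolding E_def[abs_def] by (rule energyE[OF dd(1)[OF y0] d2 dQ])
      qed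
      moreover have "2 * \<kappa> / (y * y * y) * (bw \<nu> y * bw \<nu> y) \<le> 0"
        by (rule mult_nonpos_nonneg) (use False y0 in \<open>auto simp: divide_nonpos_nonneg\<close>)
      ultimately show "\<exists>d. (E has_real_derivative d) (at y) \<and> d \<le> 0" by blast
    qed
    have "\<bar>bw \<nu> x\<bar> \<le> sqrt (max 0 (E 1))" if "x \<ge> 1" for x
    proof (rule sq_le_imp_abs_le)
      have "\<kappa> / (x * x) \<le> 0" using False that by (intro divide_nonpos_nonneg) auto
      then have "Q x \<ge> 1" by (simp add: Q_def)
      then have "bw \<nu> x * bw \<nu> x \<le> Q x * (bw \<nu> x * bw \<nu> x)"
        by (simp add: mult_le_cancel_right1)
      moreover have "0 \<le> bw1 \<nu> x * bw1 \<nu> x" by simp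
      ultimately have "bw \<nu> x * bw \<nu> x \<le> E x" unfolding E_def by linarith
      then show "bw \<nu> x * bw \<nu> x \<le> E 1" using Emono[OF that] by simp
    qed
    then show ?thesis by (intro exI[of _ "sqrt (max 0 (E 1))"] exI[of _ 1]) auto
  qed
qed

lemma Lp_nonneg:
  fixes f :: "'a::euclidean_space \<Rightarrow> real"
  assumes S: "S \<in> sets lebesgue" and f: "f \<in> borel_measurable lebesgue"
  shows "0 \<le> Lp_norm_on p S f"
proof (cases "p = \<infinity>")
  case True
  define M where "M = restrict_space lebesgue S"
  have g: "(\<lambda>x. ereal \<bar>f x\<bar>) \<in> borel_measurable M"
    unfolding M_def by (intro measurable_restrict_space1) (use f in measurable)
  have "0 \<le> real_of_ereal (esssup M (\<lambda>x. ereal \<bar>f x\<bar>))"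
  proof (cases "emeasure M (space M) = 0")
    case True
    then show ?thesis using esssup_zero_space[OF True g] by simp
  next
    case False
    have z: "esssup M (\<lambda>x. 0::ereal) = 0" by (rule esssup_const[OF False])
    have "esssup M (\<lambda>x. 0::ereal) \<le> esssup M (\<lambda>x. ereal \<bar>f x\<bar>)"
      by (rule esssup_mono) auto
    then have "0 \<le> esssup M (\<lambda>x. ereal \<bar>f x\<bar>)" unfolding z .
    then show ?thesis by (rule real_of_ereal_pos)
  qed
  then show ?thesis using True by (simp add: Lp_norm_on_def M_def)
next
  case False
  then show ?thesis by (simp add: Lp_norm_on_def)
qed

lemma esssup_restrict_le:
  fixes f :: "'a::euclidean_space \<Rightarrow> real"
  assumes S: "S \<in> sets lebesgue" and f: "f \<in> borel_measurable lebesgue"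
    and B: "\<And>x. x \<in> S \<Longrightarrow> \<bar>f x\<bar> \<le> B"
  shows "esssup (restrict_space lebesgue S) (\<lambda>x. ereal \<bar>f x\<bar>) \<le> ereal B"
proof (rule esssup_I)
  show "(\<lambda>x. ereal \<bar>f x\<bar>) \<in> borel_measurable (restrict_space lebesgue S)"
    by (intro measurable_restrict_space1) (use f in measurable)
  have SS: "S \<inter> space lebesgue \<in> sets lebesgue" using S by simp
  show "AE x in restrict_space lebesgue S. ereal \<bar>f x\<bar> \<le> ereal B"
    unfolding AE_restrict_space_iff[OF SS] using B by simp
qed

lemma Lp_upper:
  fixes f :: "'a::euclidean_space \<Rightarrow> real"
  assumes S: "S \<in> sets lebesgue" "emeasure lebesgue S < \<infinity>"
    and f: "f \<in> borel_measurable lebesgue"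
    and B: "\<And>x. x \<in> S \<Longrightarrow> \<bar>f x\<bar> \<le> B" "B \<ge> 0"
    and p: "p > 0"
  shows "Lp_norm_on p S f \<le> (if p = \<infinity> then B else B * measure lebesgue S powr (1 / real_of_ereal p))"
proof (cases "p = \<infinity>")
  case True
  have e: "esssup (restrict_space lebesgue S) (\<lambda>x. ereal \<bar>f x\<bar>) \<le> ereal B"
    by (rule esssup_restrict_le[OF S(1) f B(1)])
  have "real_of_ereal (esssup (restrict_space lebesgue S) (\<lambda>x. ereal \<bar>f x\<bar>)) \<le> B"
    using e B(2) by (cases "esssup (restrict_space lebesgue S) (\<lambda>x. ereal \<bar>f x\<bar>)") auto
  then show ?thesis using True by (simp add: Lp_norm_on_def)
next
  case False
  define r where "r = real_of_ereal p"
  have r: "r > 0" using p False by (cases p) (auto simp: r_def)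
  have int1: "set_integrable lebesgue S (\<lambda>x. \<bar>f x\<bar> powr r)"
    unfolding set_integrable_def
  proof (rule integrableI_bounded_set_indicator[where B="B powr r"])
    show "(\<lambda>x. \<bar>f x\<bar> powr r) \<in> borel_measurable lebesgue" using f by measurable
    show "AE x in lebesgue. x \<in> S \<longrightarrow> norm (\<bar>f x\<bar> powr r) \<le> B powr r"
      using B r by (auto intro!: powr_mono2)
  qed (use S in auto)
  have int2: "set_integrable lebesgue S (\<lambda>x. B powr r)"
    unfolding set_integrable_def
    by (rule integrableI_bounded_set_indicator[where B="B powr r"]) (use S in auto)
  have I: "(LINT x:S|lebesgue. \<bar>f x\<bar> powr r) \<le> (LINT x:S|lebesgue. B powr r)"
    by (rule set_integral_mono[OF int1 int2]) (use B r in \<open>auto intro!: powr_mono2\<close>)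
  also have "\<dots> = measure lebesgue S * B powr r"
    using set_integral_const[of S lebesgue "B powr r"] S by simp
  finally have I': "(LINT x:S|lebesgue. \<bar>f x\<bar> powr r) \<le> measure lebesgue S * B powr r" .
  have I0: "0 \<le> (LINT x:S|lebesgue. \<bar>f x\<bar> powr r)"
    unfolding set_lebesgue_integral_def by (rule Bochner_Integration.integral_nonneg) (auto simp: indicator_def)
  have "(LINT x:S|lebesgue. \<bar>f x\<bar> powr r) powr (1 / r) \<le> (measure lebesgue S * B powr r) powr (1 / r)"
    by (rule powr_mono2[OF _ I0 I']) (use r in simp)
  also have "\<dots> = B * measure lebesgue S powr (1 / r)"
    using r B(2) by (simp add: powr_mult powr_powr powr_one)
  finally show ?thesis using False by (simp add: Lp_norm_on_def r_def)
qed

lemma Lp_lower: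
  fixes f :: "'a::euclidean_space \<Rightarrow> real"
  assumes S: "S \<in> sets lebesgue" "emeasure lebesgue S < \<infinity>"
    and f: "f \<in> borel_measurable lebesgue"
    and B: "\<And>x. x \<in> S \<Longrightarrow> \<bar>f x\<bar> \<le> B"
    and T: "T \<subseteq> S" "T \<in> sets lebesgue" "emeasure lebesgue T > 0"
    and c: "\<And>x. x \<in> T \<Longrightarrow> c \<le> \<bar>f x\<bar>" "c \<ge> 0"
    and p: "p > 0"
  shows "(if p = \<infinity> then c else c * measure lebesgue T powr (1 / real_of_ereal p)) \<le> Lp_norm_on p S f"
proof (cases "p = \<infinity>")
  case True
  define M where "M = restrict_space lebesgue S"
  define e where "e = esssup M (\<lambda>x. ereal \<bar>f x\<bar>)"
  have eB: "e \<le> ereal B" unfolding e_def M_def by (rule esssup_restrict_le[OF S(1) f B])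
  have ce: "ereal c \<le> e"
  proof (rule ccontr)
    assume "\<not> ereal c \<le> e"
    then have lt: "e < ereal c" by simp
    have "AE x in M. ereal \<bar>f x\<bar> \<le> e" unfolding e_def by (rule esssup_AE)
    then have "AE x in M. ereal \<bar>f x\<bar> < ereal c"
    proof (rule AE_mp)
      show "AE x in M. ereal \<bar>f x\<bar> \<le> e \<longrightarrow> ereal \<bar>f x\<bar> < ereal c"
        by (rule AE_I2) (use lt in \<open>meson order.strict_trans1\<close>)
    qed
    then have "AE x in lebesgue. x \<in> S \<longrightarrow> \<bar>f x\<bar> < c"
      unfolding M_def using AE_restrict_space_iff[of S lebesgue] S by simp
    then have "AE x in lebesgue. x \<notin> T"
      by (rule AE_mp) (use T(1) c(1) in \<open>force intro!: AE_I2\<close>)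
    then have "emeasure lebesgue T = 0"
      using AE_iff_measurable[of T lebesgue "\<lambda>x. x \<notin> T"] T(2) by simp
    then show False using T(3) by simp
  qed
  have "c \<le> real_of_ereal e" using ce eB by (cases e) auto
  then show ?thesis using True by (simp add: Lp_norm_on_def M_def e_def)
next
  case False
  define r where "r = real_of_ereal p"
  have r: "r > 0" using p False by (cases p) (auto simp: r_def)
  have int1: "set_integrable lebesgue S (\<lambda>x. \<bar>f x\<bar> powr r)"
    unfolding set_integrable_def
  proof (rule integrableI_bounded_set_indicator[where B="B powr r"])
    show "(\<lambda>x. \<bar>f x\<bar> powr r) \<in> borel_measurable lebesgue" using f by measurable
    show "AE x in lebesgue. x \<in> S \<longrightarrow> norm (\<bar>f x\<bar> powr r) \<le> B powr r"
      using B r by (auto intro!: powr_mono2)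
  qed (use S in auto)
  have int2: "set_integrable lebesgue S (\<lambda>x. indicator T x * c powr r)"
    unfolding set_integrable_def
    by (rule integrableI_bounded_set_indicator[where B="c powr r"]) (use S T in \<open>auto simp: indicator_def\<close>)
  have A: "(LINT x:S|lebesgue. indicator T x * c powr r) \<le> (LINT x:S|lebesgue. \<bar>f x\<bar> powr r)"
  proof (rule set_integral_mono[OF int2 int1])
    fix x assume "x \<in> S"
    show "indicator T x * c powr r \<le> \<bar>f x\<bar> powr r"
      using c r by (auto simp: indicator_def intro!: powr_mono2)
  qed
  have B: "(LINT x:S|lebesgue. indicator T x * c powr r) = (LINT x:T|lebesgue. c powr r)"
  proof -
    have "(\<lambda>x. indicator S x *\<^sub>R (indicator T x * c powr r)) = (\<lambda>x. indicator T x *\<^sub>R (c powr r))"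
      using T(1) by (auto simp: indicator_def fun_eq_iff)
    then show ?thesis unfolding set_lebesgue_integral_def by simp
  qed
  have C: "(LINT x:T|lebesgue. c powr r) = measure lebesgue T * c powr r"
  proof -
    have "emeasure lebesgue T \<le> emeasure lebesgue S" using T S by (intro emeasure_mono) auto
    then have "emeasure lebesgue T \<noteq> \<infinity>" using S(2) by auto
    then show ?thesis using set_integral_const[of T lebesgue "c powr r"] T by simp
  qed
  have I': "measure lebesgue T * c powr r \<le> (LINT x:S|lebesgue. \<bar>f x\<bar> powr r)"
    using A B C by linarith
  have "(measure lebesgue T * c powr r) powr (1 / r) \<le> (LINT x:S|lebesgue. \<bar>f x\<bar> powr r) powr (1 / r)"
    by (rule powr_mono2[OF _ _ I']) (use r in simp_all)
  moreover have "(measure lebesgue T * c powr r) powr (1 / r) = c * measure lebesgue T powr (1 / r)"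
    using r c(2) by (simp add: powr_mult powr_powr powr_one)
  ultimately show ?thesis using False by (simp add: Lp_norm_on_def r_def)
qed

lemma bessel_J_decay:
  assumes "\<nu> \<ge> 0"
  shows "\<exists>C X0. 0 < X0 \<and> 0 \<le> C \<and> (\<forall>x\<ge>X0. \<bar>bessel_J \<nu> x\<bar> \<le> C * x powr (-1/2))"
proof -
  obtain C X0 where X0: "0 < X0" and C: "\<And>x. x \<ge> X0 \<Longrightarrow> \<bar>bw \<nu> x\<bar> \<le> C"
    using bw_bounded[OF assms] by blast
  have C0: "0 \<le> C" using C[of X0] by simp
  have "\<bar>bessel_J \<nu> x\<bar> \<le> C * x powr (-1/2)" if x: "x \<ge> X0" for x
  proof -
    have x0: "x > 0" using x X0 by simp
    have J: "bessel_J \<nu> x = (x / 2) powr \<nu> * bg \<nu> ((x / 2)\<^sup>2)"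
      by (rule bessel_J_eq) (use assms x0 in auto)
    have s: "(x / 2)\<^sup>2 = x\<^sup>2 / 4" by (simp add: power2_eq_square)
    have e: "bessel_J \<nu> x * (2 powr \<nu> * x powr (1/2)) = bw \<nu> x"
    proof -
      have h: "x powr (\<nu> + 1/2) = x powr \<nu> * x powr (1/2)" by (simp add: powr_add)
      have h2: "(x / 2) powr \<nu> = x powr \<nu> / 2 powr \<nu>" using x0 by (simp add: powr_divide)
      show ?thesis unfolding J s bw_def h h2 by simp
    qed
    have p: "2 powr \<nu> * x powr (1/2) \<ge> x powr (1/2)"
    proof -
      have "1 \<le> 2 powr \<nu>" by (rule ge_one_powr_ge_zero) (use assms in auto)
      from mult_right_mono[OF this, of "x powr (1/2)"] show ?thesis by simp
    qed
    have xp: "x powr (1/2) > 0" using x0 by simp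
    have "\<bar>bessel_J \<nu> x\<bar> * x powr (1/2) \<le> \<bar>bessel_J \<nu> x\<bar> * (2 powr \<nu> * x powr (1/2))"
      by (rule mult_left_mono[OF p]) simp
    also have "\<dots> = \<bar>bw \<nu> x\<bar>" using e[symmetric] xp by (simp add: abs_mult)
    also have "\<dots> \<le> C" using C[OF x] .
    finally have "\<bar>bessel_J \<nu> x\<bar> \<le> C / x powr (1/2)" using xp by (simp add: field_simps)
    then show ?thesis using x0 by (simp add: powr_minus_divide)
  qed
  then show ?thesis using X0 C0 by blast
qed

definition Gf :: "real \<Rightarrow> real \<Rightarrow> ('a::real_normed_vector \<Rightarrow> real) \<Rightarrow> real \<Rightarrow> 'a \<Rightarrow> real" where
  "Gf \<nu> a P j x = norm x powr a * ((j * norm x / 2) powr \<nu> * bg \<nu> ((j * norm x / 2)\<^sup>2)) * P (x /\<^sub>R norm x)"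

lemma continuous_on_bg_comp:
  "\<nu> \<ge> 0 \<Longrightarrow> continuous_on S f \<Longrightarrow> continuous_on S (\<lambda>x. bg \<nu> (f x))"
  by (rule continuous_on_compose2[OF bg_continuous_on[of \<nu> UNIV]]) auto

lemma continuous_on_P_comp:
  "continuous_on UNIV P \<Longrightarrow> continuous_on S f \<Longrightarrow> continuous_on S (\<lambda>x. P (f x))"
  by (rule continuous_on_compose2[of UNIV P]) auto

lemma Gf_cont:
  fixes P :: "'a::real_normed_vector \<Rightarrow> real"
  assumes "\<nu> \<ge> 0" "continuous_on UNIV P" "j > 0"
  shows "continuous_on (- {0}) (Gf \<nu> a P j)"
  unfolding Gf_def[abs_def]
  by (intro continuous_intros continuous_on_bg_comp[OF assms(1)] continuous_on_P_comp[OF assms(2)])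
     (use assms(3) in auto)

lemma Gf_scale:
  fixes x :: "'a::real_normed_vector"
  assumes "x \<noteq> 0" "j > 0"
  shows "Gf \<nu> a P j x = Gf \<nu> a P 1 (j *\<^sub>R x) / j powr a"
proof -
  have n: "norm (j *\<^sub>R x) = j * norm x" using assms by simp
  have d: "(j *\<^sub>R x) /\<^sub>R (j * norm x) = x /\<^sub>R norm x" using assms by simp
  have pw: "(j * norm x) powr a = j powr a * norm x powr a" by (simp add: powr_mult)
  have jp: "j powr a > 0" using assms by simp
  show ?thesis unfolding Gf_def n d pw using jp by (simp add: field_simps)
qed

lemma u_eig_eq:
  fixes Y P :: "real^'d \<Rightarrow> real"
  assumes YP: "\<And>x. norm x = 1 \<Longrightarrow> Y x = P x"
    and nu: "nu_l CARD('d) c l \<ge> 0"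
    and x: "x \<noteq> 0" and j: "bessel_zero (nu_l CARD('d) c l) k > 0"
  shows "u_eig c l k Y x = Gf (nu_l CARD('d) c l) (1 - real CARD('d) / 2) P (bessel_zero (nu_l CARD('d) c l) k) x"
proof -
  define \<nu> where "\<nu> = nu_l CARD('d) c l"
  define j where "j = bessel_zero \<nu> k"
  have "Y (x /\<^sub>R norm x) = P (x /\<^sub>R norm x)" by (rule YP) (use x in simp)
  moreover have "bessel_J \<nu> (j * norm x) = (j * norm x / 2) powr \<nu> * bg \<nu> ((j * norm x / 2)\<^sup>2)"
    by (rule bessel_J_eq) (use nu j in \<open>auto simp: \<nu>_def j_def\<close>)
  ultimately show ?thesis
    unfolding u_eig_def Gf_def Let_def \<nu>_def[symmetric] j_def[symmetric] by simp
qed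

lemma u_eig_0: "u_eig c l k Y 0 = 0"
  by (simp add: u_eig_def Let_def)

lemma Gf_bound:
  fixes P :: "'a::real_normed_vector \<Rightarrow> real"
  assumes nu: "\<nu> \<ge> 0" and nua: "\<nu> + a \<ge> 0" and j: "j > 0"
    and M: "\<And>\<xi>. norm \<xi> = 1 \<Longrightarrow> \<bar>P \<xi>\<bar> \<le> M"
  shows "\<exists>B. \<forall>x. x \<noteq> 0 \<longrightarrow> norm x \<le> 1 \<longrightarrow> \<bar>Gf \<nu> a P j x\<bar> \<le> B"
proof -
  have "bounded (bg \<nu> ` {0..(j/2)\<^sup>2})"
    by (intro compact_imp_bounded compact_continuous_image bg_continuous_on nu) simp
  then obtain Gm where "\<forall>y\<in>bg \<nu> ` {0..(j/2)\<^sup>2}. norm y \<le> Gm"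
    unfolding bounded_iff by blast
  then have Gm: "\<And>s. s \<in> {0..(j/2)\<^sup>2} \<Longrightarrow> \<bar>bg \<nu> s\<bar> \<le> Gm" by auto
  have "\<bar>Gf \<nu> a P j x\<bar> \<le> (j / 2) powr \<nu> * Gm * M" if x: "x \<noteq> 0" "norm x \<le> 1" for x
  proof -
    have nx: "norm x > 0" using x by simp
    have e1: "norm x powr a * (j * norm x / 2) powr \<nu> = (j / 2) powr \<nu> * norm x powr (\<nu> + a)"
    proof -
      have "(j * norm x / 2) powr \<nu> = (j / 2) powr \<nu> * norm x powr \<nu>"
        using powr_mult[of "j / 2" "norm x" \<nu>] by (simp add: mult.commute mult.left_commute)
      then show ?thesis using nx by (simp add: powr_add mult_ac)
    qed
    have p1: "norm x powr (\<nu> + a) \<le> 1" by (rule powr_le1) (use nua x in auto)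
    have nn: "norm x * norm x \<le> 1" using x by (intro mult_le_one) auto
    have s: "(j * norm x / 2)\<^sup>2 \<in> {0..(j/2)\<^sup>2}"
      using x j nn by (auto simp: power2_eq_square intro!: mult_mono)
    have g: "\<bar>bg \<nu> ((j * norm x / 2)\<^sup>2)\<bar> \<le> Gm" using Gm[OF s] .
    have pp: "\<bar>P (x /\<^sub>R norm x)\<bar> \<le> M" by (rule M) (use x in simp)
    have "\<bar>Gf \<nu> a P j x\<bar> = (j / 2) powr \<nu> * norm x powr (\<nu> + a) * \<bar>bg \<nu> ((j * norm x / 2)\<^sup>2)\<bar> * \<bar>P (x /\<^sub>R norm x)\<bar>"
      unfolding Gf_def using e1 by (simp add: abs_mult mult_ac)
    also have "\<dots> \<le> (j / 2) powr \<nu> * 1 * Gm * M"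
      using p1 g pp by (intro mult_mono) auto
    finally show ?thesis by simp
  qed
  then show ?thesis by blast
qed

lemma ann_bound:
  assumes a: "a \<le> 0" and eps: "0 < \<epsilon>" and x: "\<epsilon> \<le> nx"
    and C: "\<And>t. t \<ge> X0 \<Longrightarrow> \<bar>bessel_J \<nu> t\<bar> \<le> C * t powr (-1/2)" "C \<ge> 0"
    and j: "j > 0" "X0 \<le> j * \<epsilon>" and Yv: "\<bar>Yv\<bar> \<le> M"
  shows "\<bar>nx powr a * bessel_J \<nu> (j * nx) * Yv\<bar> \<le> (\<epsilon> powr a * C * \<epsilon> powr (-1/2) * M) * j powr (-1/2)"
proof -
  have nx: "nx > 0" using eps x by simp
  have M0: "M \<ge> 0" using Yv by simp
  have p1: "nx powr a \<le> \<epsilon> powr a" by (rule powr_mono2'[OF a eps x])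
  have jx: "j * \<epsilon> \<le> j * nx" using x j by simp
  have p2: "(j * nx) powr (-1/2) \<le> (j * \<epsilon>) powr (-1/2)"
    by (rule powr_mono2'[OF _ _ jx]) (use j eps in auto)
  have J: "\<bar>bessel_J \<nu> (j * nx)\<bar> \<le> C * (j * \<epsilon>) powr (-1/2)"
  proof -
    have "X0 \<le> j * nx" using j(2) jx by linarith
    then have "\<bar>bessel_J \<nu> (j * nx)\<bar> \<le> C * (j * nx) powr (-1/2)" by (rule C(1))
    also have "\<dots> \<le> C * (j * \<epsilon>) powr (-1/2)" using p2 C(2) by (rule mult_left_mono)
    finally show ?thesis .
  qed
  have "\<bar>nx powr a * bessel_J \<nu> (j * nx) * Yv\<bar> = nx powr a * \<bar>bessel_J \<nu> (j * nx)\<bar> * \<bar>Yv\<bar>"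
    by (simp add: abs_mult)
  also have "\<dots> \<le> \<epsilon> powr a * (C * (j * \<epsilon>) powr (-1/2)) * M"
    using p1 J Yv by (intro mult_mono) auto
  also have "\<dots> = (\<epsilon> powr a * C * \<epsilon> powr (-1/2) * M) * j powr (-1/2)"
    by (simp add: powr_mult mult_ac)
  finally show ?thesis .
qed

lemma ratio_alg:
  assumes j: "j > 0" and \<rho>: "\<rho> > 0" and \<delta>: "\<delta> > 0" and V: "V > 0" and r: "r > 0"
  shows "(K * j powr (-1/2) * A powr (1/r)) / (\<delta> / j powr a * (((\<rho> / j) ^ d) * V) powr (1/r))
       = (K * A powr (1/r) / (\<delta> * \<rho> powr (real d / r) * V powr (1/r))) * j powr (a - 1/2 + real d / r)"
proof -
  have rj: "\<rho> / j > 0" using j \<rho> by simp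
  have e1: "(((\<rho> / j) ^ d) * V) powr (1/r) = \<rho> powr (real d / r) / j powr (real d / r) * V powr (1/r)"
  proof -
    have "(\<rho> / j) ^ d = (\<rho> / j) powr real d" using powr_realpow[OF rj, of d] by simp
    then have "(((\<rho> / j) ^ d) * V) powr (1/r) = (\<rho> / j) powr (real d / r) * V powr (1/r)"
      by (simp add: powr_mult powr_powr)
    also have "(\<rho> / j) powr (real d / r) = \<rho> powr (real d / r) / j powr (real d / r)"
      using j \<rho> by (simp add: powr_divide)
    finally show ?thesis .
  qed
  have e2: "j powr (a - 1/2 + real d / r) = j powr (-1/2) * j powr a * j powr (real d / r)"
    by (simp add: powr_add[symmetric])
  have pos: "j powr a > 0" "j powr (real d / r) > 0" "\<rho> powr (real d / r) > 0" "V powr (1/r) > 0"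
    using j \<rho> V by auto
  show ?thesis unfolding e1 e2 using pos \<delta> by (simp add: field_simps)
qed

theorem corollary2p7:
  fixes Y :: "real^'d \<Rightarrow> real" and c \<epsilon> :: real and l :: nat and p :: ereal
  assumes "CARD('d) \<ge> 2"
    and "c \<ge> 0"
    and "spherical_harmonic l Y"
    and "\<exists>\<xi>::real^'d. norm \<xi> = 1 \<and> Y \<xi> \<noteq> 0"
    and "0 < \<epsilon>" and "\<epsilon> < 1"
    and "ereal (2 * real CARD('d) / (real CARD('d) - 1)) < p"
  shows "(\<lambda>k. Lp_norm_on p (annulus \<epsilon>) (u_eig c l k Y)
              / Lp_norm_on p (ball_domain :: (real^'d) set) (u_eig c l k Y)) \<longlonglongrightarrow> 0"
proof -
  define d where "d = CARD('d)"
  define \<nu> where "\<nu> = nu_l d c l"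
  define a where "a = 1 - real d / 2"
  define j where "j = bessel_zero \<nu>"
  define u where "u = (\<lambda>k. u_eig c l k Y)"
  have d2: "real d \<ge> 2" using assms(1) by (simp add: d_def)
  have nu0: "\<nu> \<ge> 0" by (simp add: \<nu>_def nu_l_def)
  have a0: "a \<le> 0" using d2 by (simp add: a_def)
  have nua: "\<nu> + a \<ge> 0"
  proof -
    have h: "real l + real d / 2 - 1 \<ge> 0" using d2 by simp
    have "real l + real d / 2 - 1 = sqrt ((real l + real d / 2 - 1)\<^sup>2)" using h by simp
    also have "\<dots> \<le> \<nu>" unfolding \<nu>_def nu_l_def by (rule real_sqrt_le_mono) simp
    finally show ?thesis by (simp add: a_def)
  qed
  have jpos: "\<And>k. j k > 0" unfolding j_def using bessel_zero_pos[OF nu0] .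
  have jlim: "filterlim j at_top sequentially" unfolding j_def by (rule bessel_zero_tendsto[OF nu0])
  obtain P where hom: "hom_poly l P" and YP: "\<And>x. norm x = 1 \<Longrightarrow> Y x = P x"
    using assms(3) unfolding spherical_harmonic_def by blast
  obtain Aset coef where Pdef: "P = (\<lambda>x. \<Sum>\<alpha>\<in>Aset. coef \<alpha> * (\<Prod>i\<in>UNIV. (x $ i) ^ (\<alpha> i)))"
    using hom unfolding hom_poly_def by blast
  have Pc: "continuous_on UNIV P" unfolding Pdef by (intro continuous_intros)
  have "bounded (P ` sphere 0 1)"
    by (intro compact_imp_bounded compact_continuous_image continuous_on_subset[OF Pc]) auto
  then obtain M where "\<forall>y\<in>P ` sphere 0 1. norm y \<le> M" unfolding bounded_iff by blast
  then have M: "\<And>\<xi>. norm \<xi> = 1 \<Longrightarrow> \<bar>P \<xi>\<bar> \<le> M" by auto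
  obtain \<xi>0 :: "real^'d" where \<xi>0: "norm \<xi>0 = 1" "Y \<xi>0 \<noteq> 0" using assms(4) by blast
  have M0: "M \<ge> 0" using M[OF \<xi>0(1)] by simp
  have P\<xi>: "P \<xi>0 \<noteq> 0" using YP \<xi>0 by simp
  have ueq: "u k x = Gf \<nu> a P (j k) x" if "x \<noteq> 0" for k x
    using u_eig_eq[where c=c and l=l and k=k and x=x and Y=Y and P=P, OF YP _ that] nu0 jpos[of k]
    by (simp add: u_def j_def \<nu>_def a_def d_def)
  have u0: "u k 0 = 0" for k by (simp add: u_def u_eig_0)
  have umeas: "u k \<in> borel_measurable lebesgue" for k
  proof -
    have "continuous_on (- {0}) (u k)"
      by (rule continuous_on_eq[OF Gf_cont[OF nu0 Pc jpos[of k]]]) (simp add: ueq)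
    then have "u k \<in> borel_measurable borel"
      by (intro borel_measurable_continuous_countable_exceptions[of "{0}"]) auto
    then show "u k \<in> borel_measurable lebesgue"
      by (intro measurable_completion) simp
  qed
  have bd: "(ball_domain :: (real^'d) set) = ball 0 1" by (auto simp: ball_domain_def)
  have an: "(annulus \<epsilon> :: (real^'d) set) = cball 0 1 - ball 0 \<epsilon>" by (auto simp: annulus_def)
  have bdF: "(ball_domain :: (real^'d) set) \<in> lmeasurable" unfolding bd by simp
  have anF: "(annulus \<epsilon> :: (real^'d) set) \<in> lmeasurable"
    unfolding an by (intro fmeasurable_Diff lmeasurable_cball fmeasurableD[OF lmeasurable_ball])
  have bdS: "(ball_domain :: (real^'d) set) \<in> sets lebesgue" "emeasure lebesgue (ball_domain :: (real^'d) set) < \<infinity>"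
    using bdF by (auto simp: fmeasurable_def)
  have anS: "(annulus \<epsilon> :: (real^'d) set) \<in> sets lebesgue" "emeasure lebesgue (annulus \<epsilon> :: (real^'d) set) < \<infinity>"
    using anF by (auto simp: fmeasurable_def)
  obtain C X0 where X0: "0 < X0" and C0: "0 \<le> C" and Cb: "\<And>t. t \<ge> X0 \<Longrightarrow> \<bar>bessel_J \<nu> t\<bar> \<le> C * t powr (-1/2)"
    using bessel_J_decay[OF nu0] by blast
  define K where "K = \<epsilon> powr a * C * \<epsilon> powr (-1/2) * M"
  have K0: "K \<ge> 0" using C0 M0 by (simp add: K_def)
  have annb: "\<bar>u k x\<bar> \<le> K * j k powr (-1/2)" if x: "x \<in> annulus \<epsilon>" and jk: "X0 \<le> j k * \<epsilon>" for k x
  proof -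
    have x': "\<epsilon> \<le> norm x" "norm x \<le> 1" using x by (auto simp: annulus_def)
    have xn: "x \<noteq> 0" using x' assms(5) by auto
    have "u k x = norm x powr a * bessel_J \<nu> (j k * norm x) * Y (x /\<^sub>R norm x)"
      by (simp add: u_def u_eig_def Let_def \<nu>_def a_def d_def j_def)
    moreover have "\<bar>Y (x /\<^sub>R norm x)\<bar> \<le> M" using YP[of "x /\<^sub>R norm x"] M[of "x /\<^sub>R norm x"] xn by simp
    ultimately show ?thesis
      using ann_bound[OF a0 assms(5) x'(1) Cb C0 jpos jk] unfolding K_def by simp
  qed
  obtain t0 where t0: "0 < t0" "t0 \<le> 1" "bessel_J \<nu> t0 \<noteq> 0"
  proof -
    have "\<not> {0<..1::real} \<subseteq> {y\<in>bZ \<nu>. y \<le> 1}"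
    proof
      assume sub: "{0<..1::real} \<subseteq> {y\<in>bZ \<nu>. y \<le> 1}"
      have "finite {0<..1::real}" by (rule finite_subset[OF sub bZ_finite[OF nu0, of 1]])
      then show False using infinite_Ioc[of "0::real" 1] by simp
    qed
    then obtain t where "t \<in> {0<..1}" "t \<notin> {y\<in>bZ \<nu>. y \<le> 1}" by blast
    then show thesis using that[of t] by (auto simp: bZ_def)
  qed
  define y0 where "y0 = t0 *\<^sub>R \<xi>0"
  have ny0: "norm y0 = t0" using t0 \<xi>0 by (simp add: y0_def)
  have y0n: "y0 \<noteq> 0" using ny0 t0 by auto
  define \<Phi> where "\<Phi> = Gf \<nu> a P 1"
  have \<Phi>y0: "\<Phi> y0 \<noteq> 0"
  proof -
    have e1: "y0 /\<^sub>R t0 = \<xi>0" using t0 by (simp add: y0_def)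
    have "bessel_J \<nu> t0 = (1 * t0 / 2) powr \<nu> * bg \<nu> ((1 * t0 / 2)\<^sup>2)"
      using bessel_J_eq[OF nu0, of t0] t0 by simp
    then have "\<Phi> y0 = t0 powr a * bessel_J \<nu> t0 * P \<xi>0" by (simp add: \<Phi>_def Gf_def ny0 e1)
    then show ?thesis using t0 P\<xi> by simp
  qed
  have cont: "isCont \<Phi> y0"
    using Gf_cont[OF nu0 Pc, of 1 a] y0n continuous_on_eq_continuous_at[of "- {0}" \<Phi>]
    unfolding \<Phi>_def by auto
  define \<delta> where "\<delta> = \<bar>\<Phi> y0\<bar> / 2"
  have \<delta>: "\<delta> > 0" using \<Phi>y0 by (simp add: \<delta>_def)
  obtain \<rho>1 where \<rho>1: "\<rho>1 > 0" "\<And>y. dist y y0 < \<rho>1 \<Longrightarrow> dist (\<Phi> y) (\<Phi> y0) < \<delta>"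
    using cont \<delta> unfolding continuous_at_eps_delta by blast
  define \<rho> where "\<rho> = min \<rho>1 (t0 / 2)"
  have \<rho>: "\<rho> > 0" using \<rho>1 t0 by (simp add: \<rho>_def)
  have inball: "y \<noteq> 0 \<and> \<delta> \<le> \<bar>\<Phi> y\<bar> \<and> norm y < t0 + \<rho>" if y: "dist y y0 < \<rho>" for y
  proof -
    have t1: "norm y0 \<le> norm y + dist y y0" using norm_triangle_ineq[of y "y0 - y"]
      by (simp add: dist_norm norm_minus_commute)
    have t2: "norm y \<le> norm y0 + dist y y0" using norm_triangle_ineq[of y0 "y - y0"]
      by (simp add: dist_norm)
    have "dist (\<Phi> y) (\<Phi> y0) < \<delta>" using \<rho>1(2)[of y] y by (simp add: \<rho>_def)
    then have "\<delta> \<le> \<bar>\<Phi> y\<bar>" unfolding dist_real_def \<delta>_def by linarith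
    moreover have "norm y > 0"
    proof -
      have "dist y y0 < t0 / 2" using y by (simp add: \<rho>_def)
      then show ?thesis using t1 ny0 t0 by linarith
    qed
    ultimately show ?thesis using t2 ny0 y by auto
  qed
  define V where "V = measure lebesgue (ball (0::real^'d) 1)"
  have V: "V > 0"
  proof -
    have "measure lborel (ball (0::real^'d) 1) > 0" by (rule content_ball_pos) simp
    then show ?thesis unfolding V_def by simp
  qed
  have Vfin: "emeasure lebesgue (ball (0::real^'d) 1) = ennreal V"
    unfolding V_def using lmeasurable_ball[of "0::real^'d" 1]
    by (intro emeasure_eq_ennreal_measure) (auto simp: fmeasurable_def)
  define T where "T k = ball ((1 / j k) *\<^sub>R y0) (\<rho> / j k)" for k
  have Tmeas: "emeasure lebesgue (T k) = ennreal ((\<rho> / j k) ^ d * V)" for k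
  proof -
    have "emeasure lebesgue (T k) = ennreal ((\<rho> / j k) ^ DIM(real^'d)) * emeasure lebesgue (ball (0::real^'d) 1)"
      unfolding T_def by (rule emeasure_lebesgue_ball_conv_unit_ball) (use \<rho> jpos[of k] in simp)
    also have "\<dots> = ennreal ((\<rho> / j k) ^ d * V)"
      unfolding Vfin using \<rho> jpos[of k] V by (simp add: d_def ennreal_mult)
    finally show ?thesis .
  qed
  have Tm: "measure lebesgue (T k) = (\<rho> / j k) ^ d * V" for k
    unfolding measure_def Tmeas using \<rho> jpos[of k] V by simp
  have Tpos: "emeasure lebesgue (T k) > 0" for k
    unfolding Tmeas using \<rho> jpos[of k] V by simp
  have Tprop: "x \<in> ball_domain \<and> \<delta> / j k powr a \<le> \<bar>u k x\<bar>" if x: "x \<in> T k" and jk: "t0 + \<rho> \<le> j k" for k x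
  proof -
    have jk0: "j k > 0" using jpos .
    have e: "j k *\<^sub>R x - y0 = j k *\<^sub>R (x - (1 / j k) *\<^sub>R y0)" using jk0 by (simp add: algebra_simps)
    have "dist (j k *\<^sub>R x) y0 = j k * dist x ((1 / j k) *\<^sub>R y0)"
      unfolding dist_norm e using jk0 by simp
    also have "\<dots> < j k * (\<rho> / j k)" using x jk0 unfolding T_def by (intro mult_strict_left_mono) (auto simp: dist_commute)
    also have "\<dots> = \<rho>" using jk0 by simp
    finally have ib: "j k *\<^sub>R x \<noteq> 0 \<and> \<delta> \<le> \<bar>\<Phi> (j k *\<^sub>R x)\<bar> \<and> norm (j k *\<^sub>R x) < t0 + \<rho>"
      by (rule inball)
    have xn: "x \<noteq> 0" using ib by auto
    have "norm x * j k < t0 + \<rho>" using ib jk0 by (simp add: mult.commute)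
    also have "\<dots> \<le> 1 * j k" using jk by simp
    finally have "norm x < 1" using jk0 by (simp only: mult_less_cancel_right_pos)
    then have xb: "x \<in> ball_domain" by (simp add: ball_domain_def)
    have "u k x = \<Phi> (j k *\<^sub>R x) / j k powr a"
      unfolding ueq[OF xn] \<Phi>_def by (rule Gf_scale[OF xn jk0])
    then have "\<bar>u k x\<bar> = \<bar>\<Phi> (j k *\<^sub>R x)\<bar> / j k powr a" using jk0 by simp
    moreover have "\<delta> / j k powr a \<le> \<bar>\<Phi> (j k *\<^sub>R x)\<bar> / j k powr a"
      using ib jk0 by (intro divide_right_mono) auto
    ultimately show ?thesis using xb by simp
  qed
  have Tsets: "T k \<in> sets lebesgue" for k unfolding T_def by (rule fmeasurableD[OF lmeasurable_ball])
  define A where "A = measure lebesgue (annulus \<epsilon> :: (real^'d) set)"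
  have d1: "real d - 1 > 0" using d2 by simp
  have p0: "p > 0"
  proof -
    have "0 < 2 * real d / (real d - 1)" using d1 d2 by simp
    then have "ereal 0 < ereal (2 * real d / (real d - 1))" by simp
    then show ?thesis using assms(7) unfolding d_def by (metis order.strict_trans zero_ereal_def)
  qed
  define r where "r = real_of_ereal p"
  have rfin: "p = ereal r \<and> 2 * real d / (real d - 1) < r" if "p \<noteq> \<infinity>"
    using that assms(7) p0 unfolding r_def d_def by (cases p) auto
  define e where "e = (if p = \<infinity> then a - 1/2 else a - 1/2 + real d / r)"
  define Kc where "Kc = (if p = \<infinity> then K / \<delta> else K * A powr (1/r) / (\<delta> * \<rho> powr (real d / r) * V powr (1/r)))"
  have e0: "e < 0"
  proof (cases "p = \<infinity>")
    case True then show ?thesis using d2 by (simp add: e_def a_def)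
  next
    case False
    then have r: "2 * real d / (real d - 1) < r" using rfin by auto
    have r2: "2 * real d < r * (real d - 1)" using r d1 by (simp add: divide_less_eq)
    have r0: "r > 0" using r d1 d2 by (smt (verit) divide_pos_pos)
    have lt: "real d / r < (real d - 1) / 2" using r2 r0 by (simp add: field_simps)
    have "e = 1 - real d / 2 - 1/2 + real d / r" using False by (simp add: e_def a_def)
    moreover have "\<And>q. e = 1 - real d / 2 - 1/2 + q \<Longrightarrow> q < (real d - 1) / 2 \<Longrightarrow> e < 0"
      by (simp add: field_simps)
    ultimately show ?thesis using lt by blast
  qed
  define J0 where "J0 = max (X0 / \<epsilon>) (t0 + \<rho>)"
  have evJ: "eventually (\<lambda>k. J0 \<le> j k) sequentially" using jlim by (simp add: filterlim_at_top)
  define num where "num k = Lp_norm_on p (annulus \<epsilon>) (u k)" for k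
  define den where "den k = Lp_norm_on p (ball_domain :: (real^'d) set) (u k)" for k
  have bound: "0 \<le> num k / den k \<and> num k / den k \<le> Kc * j k powr e" if jk: "J0 \<le> j k" for k
  proof -
    have jk0: "j k > 0" by (rule jpos)
    have jk1: "X0 \<le> j k * \<epsilon>" using jk assms(5) unfolding J0_def by (simp add: pos_divide_le_eq)
    have jk2: "t0 + \<rho> \<le> j k" using jk unfolding J0_def by simp
    have num0: "0 \<le> num k" unfolding num_def by (rule Lp_nonneg[OF anS(1) umeas])
    have KB: "K * j k powr (-1/2) \<ge> 0" using K0 by simp
    have numb: "num k \<le> (if p = \<infinity> then K * j k powr (-1/2) else K * j k powr (-1/2) * A powr (1 / r))"
      unfolding num_def A_def r_def
      by (rule Lp_upper[OF anS umeas _ KB p0]) (rule annb[OF _ jk1])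
    obtain B where B: "\<forall>x. x \<noteq> 0 \<longrightarrow> norm x \<le> 1 \<longrightarrow> \<bar>Gf \<nu> a P (j k) x\<bar> \<le> B"
      using Gf_bound[where P=P and M=M and j="j k" and a=a, OF nu0 nua jk0 M] by blast
    have Bb: "\<bar>u k x\<bar> \<le> max B 0" if "x \<in> ball_domain" for x
    proof (cases "x = 0")
      case True then show ?thesis by (simp add: u0)
    next
      case False
      then have "\<bar>u k x\<bar> \<le> B" using B that unfolding ueq[OF False] by (auto simp: ball_domain_def)
      then show ?thesis by simp
    qed
    have Tsub: "T k \<subseteq> ball_domain" using Tprop[OF _ jk2] by auto
    have Tc: "\<delta> / j k powr a \<le> \<bar>u k x\<bar>" if "x \<in> T k" for x using Tprop[OF that jk2] by auto
    have c0: "0 \<le> \<delta> / j k powr a" using \<delta> by simp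
    have denb: "(if p = \<infinity> then \<delta> / j k powr a else \<delta> / j k powr a * measure lebesgue (T k) powr (1 / r)) \<le> den k"
      unfolding den_def r_def
      by (rule Lp_lower[OF bdS umeas Bb Tsub Tsets Tpos Tc c0 p0])
    define Nb where "Nb = (if p = \<infinity> then K * j k powr (-1/2) else K * j k powr (-1/2) * A powr (1 / r))"
    define Db where "Db = (if p = \<infinity> then \<delta> / j k powr a else \<delta> / j k powr a * measure lebesgue (T k) powr (1 / r))"
    have Db0: "Db > 0"
      unfolding Db_def Tm using \<delta> \<rho> V jk0 by simp
    have Nb0: "Nb \<ge> 0" unfolding Nb_def using KB by simp
    have den0: "den k > 0" using denb Db0 unfolding Db_def by linarith
    have le: "num k / den k \<le> Nb / Db"
      by (rule frac_le[OF Nb0 _ Db0]) (use numb denb in \<open>simp_all add: Nb_def Db_def\<close>)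
    have eq: "Nb / Db = Kc * j k powr e"
    proof (cases "p = \<infinity>")
      case True
      have "j k powr (a - 1/2) = j k powr a * j k powr (-1/2)" by (simp add: powr_add[symmetric])
      then show ?thesis using True \<delta> jk0 by (simp add: Nb_def Db_def Kc_def e_def field_simps)
    next
      case False
      have r0: "r > 0"
      proof -
        have "2 * real d / (real d - 1) < r" using rfin False by auto
        moreover have "0 < 2 * real d / (real d - 1)" using d1 d2 by simp
        ultimately show ?thesis by linarith
      qed
      show ?thesis
        unfolding Nb_def Db_def Kc_def e_def Tm using False
        using ratio_alg[OF jk0 \<rho> \<delta> V r0, of K A a d] by simp
    qed
    show ?thesis using le eq num0 den0 by simp
  qed
  have lim: "(\<lambda>k. Kc * j k powr e) \<longlonglongrightarrow> 0"
    by (rule tendsto_mult_right_zero[OF tendsto_neg_powr[OF e0 jlim]])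
  have "(\<lambda>k. num k / den k) \<longlonglongrightarrow> 0"
  proof (rule tendsto_sandwich[OF _ _ tendsto_const lim])
    show "eventually (\<lambda>k. 0 \<le> num k / den k) sequentially"
      using evJ by eventually_elim (use bound in blast)
    show "eventually (\<lambda>k. num k / den k \<le> Kc * j k powr e) sequentially"
      using evJ by eventually_elim (use bound in blast)
  qed
  then show ?thesis unfolding num_def den_def u_def .
qed

end
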